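(* Let $f(t)=\sum_{n=1}^{\infty}t^{n}/n^{n}=t\int_0^1 x^{-tx}\,dx$. Then, as $t\to+\infty$, $$f(t)=\sqrt{\frac{2\pi t}{e}}\left(1-\frac{e}{24t}+O(t^{-2})\right)\exp\frac{t}{e}.$$
   Context: $x^{-tx}=\exp(-tx\ln x)$ for $x\in(0,1]$. *)

theory Defs
  imports "HOL-Analysis.Analysis" "HOL-Library.Landau_Symbols"
begin

definition sd_f :: "real \<Rightarrow> real" where
  "sd_f t = (\<Sum>n. t ^ (Suc n) / (real (Suc n)) ^ (Suc n))"

end

theory Submission
  imports Defs "HOL-Probability.Distributions" "HOL-Real_Asymp.Real_Asymp"
begin

lemma cont_at0:
  fixes G :: "real \<Rightarrow> real"
  assumes lim: "(G \<longlongrightarrow> G 0) (at_right 0)" and c: "\<And>x. 0 < x \<Longrightarrow> x \<le> 1 \<Longrightarrow> isCont G x"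
  shows "continuous_on {0..1} G"
proof -
  have "continuous (at x within {0..1}) G" if "x \<in> {0..1}" for x
  proof (cases "x = 0")
    case True
    then show ?thesis using lim by (simp add: continuous_within at_within_Icc_at_right)
  next
    case False
    then show ?thesis using that c by (auto intro: continuous_at_imp_continuous_within)
  qed
  then show ?thesis by (simp add: continuous_on_eq_continuous_within)
qed

lemma mln_le: fixes x :: real assumes "0 < x" "x \<le> 1" shows "0 \<le> - ln x" "- ln x \<le> 1 / x"
proof -
  show "0 \<le> - ln x" using assms ln_le_minus_one[of x] by linarith
  have "ln (1/x) \<le> 1/x - 1" using assms by (intro ln_le_minus_one) simp
  then show "- ln x \<le> 1 / x" using assms by (simp add: ln_div)
qed

lemma mom_int:
  fixes m :: nat
  shows "j \<le> m \<Longrightarrow> ((\<lambda>x. x ^ m * (- ln x) ^ j) has_integral (fact j / (real m + 1) ^ (j + 1))) {0..1}"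
proof (induction j)
  case 0
  have d: "((\<lambda>x. x ^ (m+1) / (real m + 1)) has_real_derivative x ^ m) (at x within {0..1})" for x :: real
  proof -
    have "((\<lambda>x. x ^ Suc m / (real m + 1)) has_real_derivative (real (Suc m) * x ^ (Suc m - Suc 0)) / (real m + 1)) (at x within {0..1})"
      by (intro DERIV_cdivide DERIV_pow)
    moreover have "(real (Suc m) * x ^ (Suc m - Suc 0)) / (real m + 1) = x ^ m"
      by (simp add: add.commute)
    ultimately show ?thesis by simp
  qed
  have "((\<lambda>x. x ^ m) has_integral (1 ^ (m+1) / (real m + 1) - 0 ^ (m+1) / (real m + 1))) {0..1}"
  proof (rule fundamental_theorem_of_calculus)
    show "\<And>x. x \<in> {0..1} \<Longrightarrow> ((\<lambda>x. x ^ (m+1) / (real m + 1)) has_vector_derivative x ^ m) (at x within {0..1})"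
      using d unfolding has_real_derivative_iff_has_vector_derivative by blast
  qed simp
  then show ?case by simp
next
  case (Suc j)
  define G where "G x = x ^ (m+1) * (- ln x) ^ (j+1) / (real m + 1)" for x :: real
  define G' where "G' x = x ^ m * (- ln x) ^ (j+1) - (real j + 1) / (real m + 1) * (x ^ m * (- ln x) ^ j)" for x :: real
  have bnd: "\<bar>G x\<bar> \<le> x" if "0 < x" "x \<le> 1" for x
  proof -
    have "0 \<le> G x" unfolding G_def using that mln_le[OF that]
      by (intro divide_nonneg_pos mult_nonneg_nonneg zero_le_power) auto
    then have "\<bar>G x\<bar> = x ^ (m+1) * (- ln x) ^ (j+1) / (real m + 1)"
      unfolding G_def by (rule abs_of_nonneg)
    also have "\<dots> \<le> x ^ (m+1) * (1/x) ^ (j+1)"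
    proof -
      have "(- ln x) ^ (j+1) \<le> (1/x) ^ (j+1)" using mln_le[OF that] by (intro power_mono) auto
      then have a1: "x ^ (m+1) * (- ln x) ^ (j+1) \<le> x ^ (m+1) * (1/x) ^ (j+1)"
        using that by (intro mult_left_mono) auto
      have a0: "0 \<le> x ^ (m+1) * (- ln x) ^ (j+1)" using that mln_le[OF that]
        by (intro mult_nonneg_nonneg zero_le_power) auto
      have gen: "A / (real m + 1) \<le> A" if "0 \<le> A" for A :: real
      proof -
        have "A \<le> A * (real m + 1)" using that mult_left_mono[of 1 "real m + 1" A] by simp
        then show ?thesis by (simp add: divide_le_eq)
      qed
      have "x ^ (m+1) * (- ln x) ^ (j+1) / (real m + 1) \<le> x ^ (m+1) * (- ln x) ^ (j+1)"
        by (rule gen[OF a0])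
      with a1 show ?thesis by linarith
    qed
    also have "\<dots> = x ^ (m - j)"
    proof -
      have "m + 1 = (m - j) + (j + 1)" using Suc.prems by simp
      then have e1: "x ^ (m+1) = x ^ (m - j) * x ^ (j+1)" by (metis power_add)
      have e2: "x ^ (j+1) * (1/x) ^ (j+1) = 1" using that by (simp add: power_mult_distrib[symmetric])
      show ?thesis by (simp only: e1 mult.assoc e2 mult_1_right)
    qed
    also have "\<dots> \<le> x ^ 1" using that Suc.prems
      by (intro power_decreasing) auto
    finally show ?thesis by simp
  qed
  have lim: "(G \<longlongrightarrow> G 0) (at_right 0)"
  proof -
    have "G 0 = 0" by (simp add: G_def)
    moreover have "(G \<longlongrightarrow> 0) (at_right 0)"
    proof (rule Lim_null_comparison)
      show "\<forall>\<^sub>F x in at_right 0. norm (G x) \<le> x"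
        using bnd eventually_at_right_real[of 0 1] by (auto elim!: eventually_mono)
      show "((\<lambda>x. x) \<longlongrightarrow> 0) (at_right (0::real))" by (rule tendsto_ident_at)
    qed
    ultimately show ?thesis by simp
  qed
  have cont: "continuous_on {0..1} G"
    by (rule cont_at0[OF lim]) (unfold G_def[abs_def], auto intro!: continuous_intros)
  have der: "(G has_vector_derivative G' x) (at x)" if "x \<in> {0<..<1}" for x
  proof -
    have x0: "x > 0" using that by simp
    have dl: "((\<lambda>x. - ln x) has_real_derivative -(1/x)) (at x)"
      using x0 by (auto intro!: derivative_eq_intros simp: inverse_eq_divide)
    have dp: "((\<lambda>x. x^(m+1)) has_real_derivative real (m+1) * x^m) (at x)"
      using DERIV_pow[of "m+1" x UNIV] by simp
    have dq: "((\<lambda>x. (- ln x)^(j+1)) has_real_derivative real (j+1) * (-(1/x) * (- ln x)^j)) (at x)"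
      using DERIV_power[OF dl, of "j+1"] by simp
    have dG: "(G has_real_derivative (x^(m+1) * (real (j+1) * (-(1/x) * (- ln x)^j)) + real (m+1) * x^m * (- ln x)^(j+1)) / (real m + 1)) (at x)"
      unfolding G_def[abs_def] by (rule DERIV_cdivide[OF DERIV_mult'[OF dp dq]])
    have alg: "(x*a*(real (j+1)*(-(1/x)*b)) + real (m+1)*a*(L*b))/(real m+1) = a*(L*b) - (real j+1)/(real m+1)*(a*b)"
      for a b L :: real
    proof -
      have s1: "x*a*(real (j+1)*(-(1/x)*b)) = - (real j + 1)*(a*b)" using x0 by (simp add: field_simps)
      have hm: "real m + 1 \<noteq> 0" by linarith
      have s2: "(- (real j + 1)*(a*b) + real (m+1)*a*(L*b))/(real m+1) = a*(L*b) - (real j+1)/(real m+1)*(a*b)"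
        using hm by (simp add: field_simps)
      show ?thesis using s1 s2 by simp
    qed
    have "(x^(m+1) * (real (j+1) * (-(1/x) * (- ln x)^j)) + real (m+1) * x^m * (- ln x)^(j+1)) / (real m + 1) = G' x"
      using alg[of "x^m" "(- ln x)^j" "- ln x"] unfolding G'_def by (simp add: mult.commute)
    with dG have "(G has_real_derivative G' x) (at x)" by simp
    then show ?thesis by (simp add: has_real_derivative_iff_has_vector_derivative)
  qed
  have "(G' has_integral (G 1 - G 0)) {0..1}"
    by (rule fundamental_theorem_of_calculus_interior[OF _ cont der]) auto
  then have i1: "(G' has_integral 0) {0..1}" by (simp add: G_def)
  have i2: "((\<lambda>x. (real j + 1) / (real m + 1) * (x ^ m * (- ln x) ^ j)) has_integral
             ((real j + 1) / (real m + 1) * (fact j / (real m + 1) ^ (j + 1)))) {0..1}"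
    using Suc by (intro has_integral_mult_right) auto
  have "((\<lambda>x. G' x + (real j + 1) / (real m + 1) * (x ^ m * (- ln x) ^ j)) has_integral
          (0 + (real j + 1) / (real m + 1) * (fact j / (real m + 1) ^ (j + 1)))) {0..1}"
    by (rule has_integral_add[OF i1 i2])
  moreover have eqf: "(\<lambda>x. G' x + (real j + 1) / (real m + 1) * (x ^ m * (- ln x) ^ j)) = (\<lambda>x. x ^ m * (- ln x) ^ Suc j)"
    by (auto simp: G'_def)
  moreover have eqv: "0 + (real j + 1) / (real m + 1) * (fact j / (real m + 1) ^ (j + 1)) = fact (Suc j) / (real m + 1) ^ (Suc j + 1)"
    by (simp add: field_simps)
  ultimately show ?case by (simp only:)
qed

lemma phi_cont: "continuous_on {0..1} (\<lambda>x::real. - x * ln x)"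
proof (rule cont_at0)
  have "((\<lambda>x::real. - x * ln x) \<longlongrightarrow> 0) (at_right 0)" by real_asymp
  then show "((\<lambda>x::real. - x * ln x) \<longlongrightarrow> - 0 * ln 0) (at_right 0)" by simp
qed (auto intro!: continuous_intros)

lemma phi_bnd: fixes x :: real assumes "0 \<le> x" "x \<le> 1" shows "0 \<le> - x * ln x" "- x * ln x \<le> 1"
proof -
  have "0 \<le> - x * ln x \<and> - x * ln x \<le> 1"
  proof (cases "x = 0")
    case False
    then have x0: "0 < x" using assms by simp
    have a: "0 \<le> - ln x" "- ln x \<le> 1 / x" using mln_le[OF x0 assms(2)] by auto
    have "- x * ln x = x * (- ln x)" by simp
    moreover have "x * (- ln x) \<le> x * (1 / x)" using a x0 by (intro mult_left_mono) auto
    moreover have "0 \<le> x * (- ln x)" using a x0 by (intro mult_nonneg_nonneg) auto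
    ultimately show ?thesis using x0 by simp
  qed simp
  then show "0 \<le> - x * ln x" "- x * ln x \<le> 1" by auto
qed

lemma phi_pow_int: "((\<lambda>x::real. (- x * ln x) ^ k) has_integral (fact k / (real k + 1) ^ (k + 1))) {0..1}"
proof -
  have "(\<lambda>x::real. (- x * ln x) ^ k) = (\<lambda>x. x ^ k * (- ln x) ^ k)"
    by (auto simp: power_mult_distrib[symmetric])
  then show ?thesis using mom_int[of k k] by simp
qed

lemma part1:
  fixes t :: real
  shows "(\<lambda>x. exp (- t * x * ln x)) integrable_on {0..1}
            \<and> sd_f t = t * integral {0..1} (\<lambda>x. exp (- t * x * ln x))"
proof -
  define \<phi> where "\<phi> x = - x * ln x" for x :: real
  define f where "f k x = (t * \<phi> x) ^ k / fact k" for k :: nat and x :: real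
  have ex: "exp (- t * x * ln x) = exp (t * \<phi> x)" for x by (simp add: \<phi>_def)
  have uf: "uniform_limit {0..1} (\<lambda>n x. \<Sum>i<n. f i x) (\<lambda>x. suminf (\<lambda>i. f i x)) sequentially"
  proof (rule Weierstrass_m_test)
    show "norm (f n x) \<le> \<bar>t\<bar> ^ n / fact n" if "x \<in> {0..1}" for n x
    proof -
      have "\<bar>\<phi> x\<bar> \<le> 1" using phi_bnd[of x] that by (auto simp: \<phi>_def)
      then have "\<bar>t * \<phi> x\<bar> \<le> \<bar>t\<bar>" by (simp add: abs_mult mult_left_le)
      then have "\<bar>t * \<phi> x\<bar> ^ n \<le> \<bar>t\<bar> ^ n" by (intro power_mono) auto
      then show ?thesis by (simp add: f_def abs_mult power_abs divide_right_mono)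
    qed
    show "summable (\<lambda>n. \<bar>t\<bar> ^ n / fact n)"
      using summable_exp[of "\<bar>t\<bar>"] by (simp add: field_simps)
  qed
  have sf: "suminf (\<lambda>i. f i x) = exp (t * \<phi> x)" for x
    using exp_converges[of "t * \<phi> x"] by (simp add: f_def sums_iff field_simps)
  have cf: "continuous_on {0..1} (\<lambda>x. \<Sum>i<n. f i x)" for n
  proof -
    have pc: "continuous_on {0..1} \<phi>" unfolding \<phi>_def[abs_def] by (rule phi_cont)
    show ?thesis unfolding f_def by (intro continuous_intros pc) auto
  qed
  obtain I J where I: "\<And>n. ((\<lambda>x. \<Sum>i<n. f i x) has_integral I n) {0..1}"
    and J: "((\<lambda>x. suminf (\<lambda>i. f i x)) has_integral J) {0..1}" and IJ: "I \<longlonglongrightarrow> J"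
    using uniform_limit_integral[OF uf cf] by auto
  have fi: "(f i has_integral t ^ i / (real i + 1) ^ (i + 1)) {0..1}" for i
  proof -
    have "((\<lambda>x. t ^ i / fact i * (- x * ln x) ^ i) has_integral t ^ i / fact i * (fact i / (real i + 1) ^ (i + 1))) {0..1}"
      by (intro has_integral_mult_right phi_pow_int)
    moreover have "(\<lambda>x. t ^ i / fact i * (- x * ln x) ^ i) = f i"
      by (rule ext) (simp add: f_def \<phi>_def power_mult_distrib[symmetric])
    ultimately show ?thesis by simp
  qed
  have "((\<lambda>x. \<Sum>i<n. f i x) has_integral (\<Sum>i<n. t ^ i / (real i + 1) ^ (i + 1))) {0..1}" for n
    using fi by (intro has_integral_sum) auto
  then have In: "I n = (\<Sum>i<n. t ^ i / (real i + 1) ^ (i + 1))" for n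
    using I has_integral_unique by blast
  have sJ: "(\<lambda>i. t ^ i / (real i + 1) ^ (i + 1)) sums J"
  proof -
    have "I = (\<lambda>n. \<Sum>i<n. t ^ i / (real i + 1) ^ (i + 1))" using In by (rule ext)
    then show ?thesis unfolding sums_def using IJ by simp
  qed
  have J': "((\<lambda>x. exp (- t * x * ln x)) has_integral J) {0..1}"
  proof -
    have "(\<lambda>x. suminf (\<lambda>i. f i x)) = (\<lambda>x. exp (- t * x * ln x))" by (rule ext) (simp only: sf ex)
    then show ?thesis using J by simp
  qed
  have "(\<lambda>n. t ^ Suc n / real (Suc n) ^ Suc n) sums (t * J)"
  proof -
    have "(\<lambda>i. t * (t ^ i / (real i + 1) ^ (i + 1))) sums (t * J)" by (rule sums_mult[OF sJ])
    then show ?thesis by (simp add: add.commute)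
  qed
  then have "sd_f t = t * J" unfolding sd_f_def by (simp add: sums_iff)
  with J' show ?thesis by (auto simp: integral_unique)
qed

definition hh :: "real \<Rightarrow> real" where "hh y = (1 + y) * ln (1 + y) - y"

lemma h_taylor:
  fixes y :: real assumes y: "\<bar>y\<bar> \<le> 1/2"
  shows "\<bar>hh y - (y^2/2 - y^3/6 + y^4/12 - y^5/20)\<bar> \<le> 2 * y^6"
proof -
  define d :: "nat \<Rightarrow> real \<Rightarrow> real" where
    "d m y = (if m = 0 then hh y else if m = 1 then ln (1 + y) else if m = 2 then 1 / (1 + y)
       else if m = 3 then - 1 / (1 + y)^2 else if m = 4 then 2 / (1 + y)^3
       else if m = 5 then - 6 / (1 + y)^4 else 24 / (1 + y)^5)" for m y
  have D: "DERIV (d m) t :> d (Suc m) t" if "m < 6" "\<bar>t\<bar> \<le> \<bar>y\<bar>" for m t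
  proof -
    have t: "1 + t > 0" using that y by linarith
    have "m = 0 \<or> m = 1 \<or> m = 2 \<or> m = 3 \<or> m = 4 \<or> m = 5" using that by linarith
    then show ?thesis
    proof (elim disjE)
      assume m: "m = 0"
      have "d m = (\<lambda>y. (1 + y) * ln (1 + y) - y)" by (rule ext) (simp add: d_def m hh_def)
      then show ?thesis using t by (auto intro!: derivative_eq_intros simp: d_def m field_simps; simp add: eval_nat_numeral algebra_simps)
    next
      assume m: "m = 1"
      have "d m = (\<lambda>y. ln (1 + y))" by (rule ext) (simp add: d_def m)
      then show ?thesis using t by (auto intro!: derivative_eq_intros simp: d_def m field_simps; simp add: eval_nat_numeral algebra_simps)
    next
      assume m: "m = 2"
      have "d m = (\<lambda>y. 1 / (1 + y))" by (rule ext) (simp add: d_def m)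
      then show ?thesis using t by (auto intro!: derivative_eq_intros simp: d_def m field_simps power2_eq_square)
    next
      assume m: "m = 3"
      have "d m = (\<lambda>y. - 1 / (1 + y)^2)" by (rule ext) (simp add: d_def m)
      then show ?thesis using t by (auto intro!: derivative_eq_intros simp: d_def m field_simps; simp add: eval_nat_numeral algebra_simps)
    next
      assume m: "m = 4"
      have "d m = (\<lambda>y. 2 / (1 + y)^3)" by (rule ext) (simp add: d_def m)
      then show ?thesis using t by (auto intro!: derivative_eq_intros simp: d_def m field_simps; simp add: eval_nat_numeral algebra_simps)
    next
      assume m: "m = 5"
      have "d m = (\<lambda>y. - 6 / (1 + y)^4)" by (rule ext) (simp add: d_def m)
      then show ?thesis using t by (auto intro!: derivative_eq_intros simp: d_def m field_simps; simp add: eval_nat_numeral algebra_simps)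
    qed
  qed
  obtain t where t: "\<bar>t\<bar> \<le> \<bar>y\<bar>" and eq: "hh y = (\<Sum>m<6. d m 0 / fact m * y ^ m) + d 6 t / fact 6 * y ^ 6"
  proof -
    have dd: "d 0 = hh" by (rule ext) (simp add: d_def)
    have "\<forall>m t. m < 6 \<and> \<bar>t\<bar> \<le> \<bar>y\<bar> \<longrightarrow> DERIV (d m) t :> d (Suc m) t" using D by blast
    from Maclaurin_bi_le[of d hh 6 y, OF dd this] show ?thesis using that by blast
  qed
  have s: "(\<Sum>m<6. d m 0 / fact m * y ^ m) = y^2/2 - y^3/6 + y^4/12 - y^5/20"
    by (simp add: d_def eval_nat_numeral hh_def)
  have t1: "1 + t \<ge> 1/2" using t y by linarith
  have "(1/2)^5 \<le> (1 + t)^5" using t1 by (intro power_mono) auto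
  then have r: "d 6 t / fact 6 \<le> 2" "0 \<le> d 6 t / fact 6" using t1
    by (auto simp: d_def eval_nat_numeral field_simps)
  have "\<bar>hh y - (y^2/2 - y^3/6 + y^4/12 - y^5/20)\<bar> = \<bar>d 6 t / fact 6\<bar> * y^6"
    using eq s by (simp add: abs_mult)
  also have "\<dots> \<le> 2 * y^6" using r by (intro mult_right_mono) auto
  finally show ?thesis .
qed

lemma abs_mul_le: fixes a b A B :: real assumes "\<bar>a\<bar> \<le> A" "\<bar>b\<bar> \<le> B" shows "\<bar>a * b\<bar> \<le> A * B"
  using assms by (simp add: abs_mult mult_mono')

lemma abs3: fixes a b c :: real shows "\<bar>a + b + c\<bar> \<le> \<bar>a\<bar> + \<bar>b\<bar> + \<bar>c\<bar>"
  by linarith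

lemma abs4: fixes a b c d :: real shows "\<bar>a + b + c + d\<bar> \<le> \<bar>a\<bar> + \<bar>b\<bar> + \<bar>c\<bar> + \<bar>d\<bar>"
  by linarith

lemma B_alg:
  fixes q Y z z0 u3 u4 u5 th :: real
  assumes q: "0 \<le> q" and Y: "0 \<le> Y" "Y \<le> 1/2"
    and h3: "\<bar>u3\<bar> \<le> q/6" and h4: "\<bar>u4\<bar> \<le> q*Y/12" and h5: "\<bar>u5\<bar> \<le> q*Y^2/20"
    and z0: "z0 = u3 + u4 + u5" and dz: "\<bar>z - z0\<bar> \<le> 2*q*Y^3" and hz: "\<bar>z\<bar> \<le> q/2"
  shows "\<bar>(z - z0) + (z^2 - z0^2)/2 + (z^3 - z0^3)/6 + exp th/24 * z^4
          + (2*u3*u5 + u4^2 + 2*u4*u5 + u5^2)/2 + (z0-u3)*(z0^2 + z0*u3 + u3^2)/6\<bar>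
        \<le> 2*q*Y^3 + 2*q^2*Y^2 + 2*q^3*Y + exp th * q^4"
proof -
  have Y1: "Y \<le> 1" using Y by simp
  have Y2: "Y^2 \<le> Y" using Y by (simp add: power2_eq_square mult_left_le)
  have Y3: "Y^3 \<le> Y^2" using Y by (simp add: power3_eq_cube power2_eq_square mult_left_le)
  have Y2h: "Y^2 \<le> 1/4" using Y power_mono[of Y "1/2" 2] by (simp add: power2_eq_square)
  have hz0: "\<bar>z0\<bar> \<le> q/4"
  proof -
    have "\<bar>z0\<bar> \<le> q/6 + q*Y/12 + q*Y^2/20" using z0 h3 h4 h5 by linarith
    moreover have "q*Y \<le> q*(1/2)" using q Y by (intro mult_left_mono) auto
    moreover have "q*Y^2 \<le> q*(1/4)" using q Y2h by (intro mult_left_mono) auto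
    ultimately show ?thesis by linarith
  qed
  have T1: "\<bar>z - z0\<bar> \<le> 2*q*Y^3" by (rule dz)
  have T2: "\<bar>(z^2 - z0^2)/2\<bar> \<le> q^2*Y^2"
  proof -
    have e: "z^2 - z0^2 = (z - z0) * (z + z0)" by (simp add: power2_eq_square algebra_simps)
    have s: "\<bar>z + z0\<bar> \<le> 3*q/4" using hz hz0 by linarith
    have "\<bar>(z - z0) * (z + z0)\<bar> \<le> 2*q*Y^3 * (3*q/4)" by (rule abs_mul_le[OF dz s])
    then have "\<bar>z^2 - z0^2\<bar> \<le> 2*q*Y^3 * (3*q/4)" using e by simp
    moreover have "2*q*Y^3 * (3*q/4) \<le> 2 * (q^2 * Y^2)"
    proof -
      have "q^2 * Y^3 \<le> q^2 * Y^2" using Y3 by (intro mult_left_mono) auto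
      moreover have "2*q*Y^3 * (3*q/4) = 3/2 * (q^2 * Y^3)" by (simp add: power2_eq_square)
      moreover have "0 \<le> q^2 * Y^3" using q Y by simp
      ultimately show ?thesis by linarith
    qed
    ultimately show ?thesis by simp
  qed
  have T3: "\<bar>(z^3 - z0^3)/6\<bar> \<le> q^3*Y"
  proof -
    have e: "z^3 - z0^3 = (z - z0) * (z^2 + z*z0 + z0^2)" by (simp add: power2_eq_square power3_eq_cube algebra_simps)
    have s: "\<bar>z^2 + z*z0 + z0^2\<bar> \<le> q^2"
    proof -
      have "\<bar>z^2\<bar> \<le> q/2 * (q/2)" using abs_mul_le[OF hz hz] by (simp add: power2_eq_square)
      moreover have "\<bar>z*z0\<bar> \<le> q/2 * (q/4)" using abs_mul_le[OF hz hz0] .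
      moreover have "\<bar>z0^2\<bar> \<le> q/4 * (q/4)" using abs_mul_le[OF hz0 hz0] by (simp add: power2_eq_square)
      moreover have "q/2 * (q/2) + q/2 * (q/4) + q/4 * (q/4) = 7/16 * q^2" by (simp add: power2_eq_square)
      moreover have "0 \<le> q^2" by simp
      moreover note abs3[of "z^2" "z*z0" "z0^2"]
      ultimately show ?thesis by linarith
    qed
    have "\<bar>(z - z0) * (z^2 + z*z0 + z0^2)\<bar> \<le> 2*q*Y^3 * q^2" by (rule abs_mul_le[OF dz s])
    then have "\<bar>z^3 - z0^3\<bar> \<le> 2*q*Y^3 * q^2" using e by simp
    moreover have "2*q*Y^3 * q^2 \<le> 6 * (q^3 * Y)"
    proof -
      have "Y^3 \<le> Y" using Y2 Y3 by linarith
      then have "q^3 * Y^3 \<le> q^3 * Y" using q by (intro mult_left_mono) auto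
      moreover have "2*q*Y^3 * q^2 = 2 * (q^3 * Y^3)" by (simp add: power2_eq_square power3_eq_cube)
      moreover have "0 \<le> q^3 * Y" using q Y by simp
      ultimately show ?thesis by linarith
    qed
    ultimately have "\<bar>z^3 - z0^3\<bar> \<le> 6 * (q^3 * Y)" by linarith
    then show ?thesis by simp
  qed
  have T4: "\<bar>exp th/24 * z^4\<bar> \<le> exp th * q^4"
  proof -
    have "\<bar>z\<bar>^4 \<le> (q/2)^4" using hz by (intro power_mono) auto
    then have "\<bar>z^4\<bar> * 16 \<le> q^4" using q by (simp add: power_abs power_divide)
    moreover have "0 \<le> q^4" using q by simp
    ultimately have "\<bar>z^4\<bar> \<le> q^4" by linarith
    then have "exp th * \<bar>z^4\<bar> \<le> exp th * q^4" by (intro mult_left_mono) auto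
    moreover have "\<bar>exp th/24 * z^4\<bar> \<le> exp th * \<bar>z^4\<bar>" by (simp add: abs_mult)
    ultimately show ?thesis by linarith
  qed
  have T5: "\<bar>(2*u3*u5 + u4^2 + 2*u4*u5 + u5^2)/2\<bar> \<le> q^2*Y^2"
  proof -
    have a: "\<bar>u3*u5\<bar> \<le> q/6 * (q*Y^2/20)" by (rule abs_mul_le[OF h3 h5])
    have b: "\<bar>u4*u4\<bar> \<le> q*Y/12 * (q*Y/12)" by (rule abs_mul_le[OF h4 h4])
    have c: "\<bar>u4*u5\<bar> \<le> q*Y/12 * (q*Y^2/20)" by (rule abs_mul_le[OF h4 h5])
    have d: "\<bar>u5*u5\<bar> \<le> q*Y^2/20 * (q*Y^2/20)" by (rule abs_mul_le[OF h5 h5])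
    have qy: "0 \<le> q^2*Y^2" by simp
    have Y21: "Y^2 \<le> 1" using Y2 Y1 by linarith
    have "q^2*Y^2*Y \<le> q^2*Y^2*1" by (rule mult_left_mono[OF Y1 qy])
    moreover have "q*Y/12 * (q*Y^2/20) = q^2*Y^2*Y/240" by (simp add: power2_eq_square)
    ultimately have e1: "q*Y/12 * (q*Y^2/20) \<le> q^2*Y^2/240" by linarith
    have "q^2*Y^2*Y^2 \<le> q^2*Y^2*1" by (rule mult_left_mono[OF Y21 qy])
    moreover have "q*Y^2/20 * (q*Y^2/20) = q^2*Y^2*Y^2/400" by (simp add: power2_eq_square)
    ultimately have e2: "q*Y^2/20 * (q*Y^2/20) \<le> q^2*Y^2/400" by linarith
    have e3: "q/6 * (q*Y^2/20) = q^2*Y^2/120" "q*Y/12 * (q*Y/12) = q^2*Y^2/144"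
      by (simp_all add: power2_eq_square algebra_simps)
    have "0 \<le> q^2*Y^2" by simp
    moreover have "\<bar>2*u3*u5 + u4^2 + 2*u4*u5 + u5^2\<bar> \<le> 2*\<bar>u3*u5\<bar> + \<bar>u4*u4\<bar> + 2*\<bar>u4*u5\<bar> + \<bar>u5*u5\<bar>"
      using abs4[of "2*u3*u5" "u4^2" "2*u4*u5" "u5^2"] by (simp add: power2_eq_square abs_mult mult.assoc)
    moreover have "\<bar>(2*u3*u5 + u4^2 + 2*u4*u5 + u5^2)/2\<bar> = \<bar>2*u3*u5 + u4^2 + 2*u4*u5 + u5^2\<bar>/2" by simp
    ultimately show ?thesis using a b c d e1 e2 e3 by linarith
  qed
  have T6: "\<bar>(z0-u3)*(z0^2 + z0*u3 + u3^2)/6\<bar> \<le> q^3*Y"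
  proof -
    have "\<bar>z0 - u3\<bar> \<le> q*Y/12 + q*Y^2/20" using z0 h4 h5 by linarith
    moreover have "q*Y^2 \<le> q*Y" using q Y2 by (intro mult_left_mono) auto
    moreover have "0 \<le> q*Y" using q Y by simp
    ultimately have f1: "\<bar>z0 - u3\<bar> \<le> q*Y" by linarith
    have "\<bar>z0^2\<bar> \<le> q/4 * (q/4)" using abs_mul_le[OF hz0 hz0] by (simp add: power2_eq_square)
    moreover have "\<bar>z0*u3\<bar> \<le> q/4 * (q/6)" using abs_mul_le[OF hz0 h3] .
    moreover have "\<bar>u3^2\<bar> \<le> q/6 * (q/6)" using abs_mul_le[OF h3 h3] by (simp add: power2_eq_square)
    moreover have "q/4 * (q/4) + q/4 * (q/6) + q/6 * (q/6) \<le> q^2" by (simp add: power2_eq_square)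
    moreover note abs3[of "z0^2" "z0*u3" "u3^2"]
    ultimately have f2: "\<bar>z0^2 + z0*u3 + u3^2\<bar> \<le> q^2" by linarith
    have "\<bar>(z0-u3)*(z0^2 + z0*u3 + u3^2)\<bar> \<le> q*Y * q^2" by (rule abs_mul_le[OF f1 f2])
    moreover have "q*Y*q^2 = q^3*Y" by (simp add: power2_eq_square power3_eq_cube)
    moreover have "0 \<le> q^3*Y" using q Y by simp
    ultimately show ?thesis by simp
  qed
  have "0 \<le> q^2*Y^2" "0 \<le> q^3*Y" using q Y by auto
  moreover have "\<bar>a1 + a2 + a3 + a4 + a5 + a6\<bar> \<le> \<bar>a1\<bar> + \<bar>a2\<bar> + \<bar>a3\<bar> + \<bar>a4\<bar> + \<bar>a5\<bar> + \<bar>a6\<bar>" for a1 a2 a3 a4 a5 a6 :: real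
    by linarith
  note this[of "z - z0" "(z^2 - z0^2)/2" "(z^3 - z0^3)/6" "exp th/24 * z^4"
      "(2*u3*u5 + u4^2 + 2*u4*u5 + u5^2)/2" "(z0-u3)*(z0^2 + z0*u3 + u3^2)/6"]
  ultimately show ?thesis using T1 T2 T3 T4 T5 T6 by linarith
qed


definition Qf :: "real \<Rightarrow> real \<Rightarrow> real" where "Qf L y = 1 - L*y^4/12 + L^2*y^6/72"
definition Of :: "real \<Rightarrow> real \<Rightarrow> real" where
  "Of L y = L*y^3/6 + L*y^5/20 + (L*y^3/6)*(-L*y^4/12) + (L*y^3/6)^3/6"

lemma B_point:
  fixes L y :: real assumes L: "0 \<le> L" and y: "\<bar>y\<bar> \<le> 1/2"
  shows "\<bar>exp (-L*hh y) - exp (-L*y^2/2) * (Qf L y + Of L y)\<bar>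
           \<le> 2 * exp (-L*y^2/4) * (L*y^6 + L^2*y^8 + L^3*y^10 + L^4*y^12)"
proof -
  define Y where "Y = \<bar>y\<bar>"
  define q where "q = L * Y^3"
  define u3 where "u3 = L*y^3/6"
  define u4 where "u4 = -L*y^4/12"
  define u5 where "u5 = L*y^5/20"
  define z0 where "z0 = u3 + u4 + u5"
  define z where "z = - L * (hh y - y^2/2)"
  have Y0: "0 \<le> Y" "Y \<le> 1/2" using y by (auto simp: Y_def)
  have q0: "0 \<le> q" using L Y0 by (simp add: q_def)
  have ev: "y ^ n = Y ^ n" if "even n" for n unfolding Y_def using that by (simp add: power_even_abs)
  have ev6: "y^6 = Y^6" and ev8: "y^8 = Y^8" and ev10: "y^10 = Y^10" and ev12: "y^12 = Y^12" and ev2: "y^2 = Y^2"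
    by (auto intro!: ev)
  have h3: "\<bar>u3\<bar> \<le> q/6" unfolding u3_def q_def Y_def using L by (simp add: abs_mult power_abs)
  have h4: "\<bar>u4\<bar> \<le> q*Y/12" unfolding u4_def q_def Y_def using L by (simp add: abs_mult power_abs eval_nat_numeral)
  have h5: "\<bar>u5\<bar> \<le> q*Y^2/20" unfolding u5_def q_def Y_def using L by (simp add: abs_mult power_abs eval_nat_numeral)
  have dz: "\<bar>z - z0\<bar> \<le> 2*q*Y^3"
  proof -
    have "z - z0 = - L * (hh y - (y^2/2 - y^3/6 + y^4/12 - y^5/20))"
      by (simp add: z_def z0_def u3_def u4_def u5_def algebra_simps)
    then have "\<bar>z - z0\<bar> = L * \<bar>hh y - (y^2/2 - y^3/6 + y^4/12 - y^5/20)\<bar>" using L by (simp add: abs_mult)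
    also have "\<dots> \<le> L * (2 * y^6)" using h_taylor[OF y] L by (intro mult_left_mono) auto
    also have "\<dots> = 2*q*Y^3" unfolding ev6 q_def by (simp add: eval_nat_numeral algebra_simps)
    finally show ?thesis .
  qed
  have Y3: "Y^3 \<le> 1/8" using power_mono[OF Y0(2) Y0(1), of 3] by (simp add: power_divide)
  have hz0: "\<bar>z0\<bar> \<le> q/4"
  proof -
    have "\<bar>z0\<bar> \<le> q/6 + q*Y/12 + q*Y^2/20" using h3 h4 h5 unfolding z0_def by linarith
    moreover have "q*Y \<le> q*(1/2)" using q0 Y0 by (intro mult_left_mono) auto
    moreover have "Y^2 \<le> 1/4" using power_mono[OF Y0(2) Y0(1), of 2] by (simp add: power_divide)
    then have "q*Y^2 \<le> q*(1/4)" using q0 by (intro mult_left_mono) auto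
    ultimately show ?thesis by linarith
  qed
  have hz: "\<bar>z\<bar> \<le> q/2"
  proof -
    have "2*q*Y^3 \<le> 2*q*(1/8)" using q0 Y3 by (intro mult_left_mono) auto
    then show ?thesis using dz hz0 by linarith
  qed
  have hz2: "\<bar>z\<bar> \<le> L*y^2/4"
  proof -
    have "Y^3 \<le> Y^2 * (1/2)" using Y0 mult_left_mono[OF Y0(2), of "Y^2"] by (simp add: power3_eq_cube power2_eq_square)
    then have "L*Y^3 \<le> L*(Y^2*(1/2))" using L by (intro mult_left_mono) auto
    then show ?thesis using hz unfolding ev2 q_def by simp
  qed
  obtain th where th: "\<bar>th\<bar> \<le> \<bar>z\<bar>" and ez: "exp z = (\<Sum>m<4. z ^ m / fact m) + exp th / fact 4 * z ^ 4"
    using Maclaurin_exp_le[of z 4] by blast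
  have eth: "exp th \<le> exp (L*y^2/4)" using th hz2 by simp
  have E: "exp z - Qf L y - Of L y = (z - z0) + (z^2 - z0^2)/2 + (z^3 - z0^3)/6 + exp th/24 * z^4
          + (2*u3*u5 + u4^2 + 2*u4*u5 + u5^2)/2 + (z0-u3)*(z0^2 + z0*u3 + u3^2)/6"
    unfolding ez by (simp add: Qf_def Of_def z0_def u3_def u4_def u5_def eval_nat_numeral field_simps)
  have bE: "\<bar>exp z - Qf L y - Of L y\<bar> \<le> 2*q*Y^3 + 2*q^2*Y^2 + 2*q^3*Y + exp th * q^4"
    unfolding E by (rule B_alg[OF q0 Y0 h3 h4 h5 z0_def dz hz])
  have conv: "q*Y^3 = L*y^6" "q^2*Y^2 = L^2*y^8" "q^3*Y = L^3*y^10" "q^4 = L^4*y^12"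
    unfolding ev6 ev8 ev10 ev12 q_def by (simp_all add: eval_nat_numeral algebra_simps)
  define S where "S = L*y^6 + L^2*y^8 + L^3*y^10 + L^4*y^12"
  have S0: "0 \<le> S" using L by (simp add: S_def)
  have e1: "1 \<le> exp (L*y^2/4)" using L by simp
  have "\<bar>exp z - Qf L y - Of L y\<bar> \<le> 2*(L*y^6) + 2*(L^2*y^8) + 2*(L^3*y^10) + exp th * (L^4*y^12)"
    using bE conv by simp
  also have "\<dots> \<le> 2 * exp (L*y^2/4) * S"
  proof -
    have a: "exp th * (L^4*y^12) \<le> exp (L*y^2/4) * (L^4*y^12)" using eth L by (intro mult_right_mono) auto
    have b: "2*(L*y^6 + L^2*y^8 + L^3*y^10) \<le> 2*exp (L*y^2/4)*(L*y^6 + L^2*y^8 + L^3*y^10)"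
      using e1 L by (intro mult_right_mono) auto
    have c: "0 \<le> exp (L*y^2/4) * (L^4*y^12)" using L by (simp add: ev12)
    have d: "2 * exp (L*y^2/4) * S = 2*exp (L*y^2/4)*(L*y^6 + L^2*y^8 + L^3*y^10) + 2*(exp (L*y^2/4) * (L^4*y^12))"
      by (simp add: S_def algebra_simps)
    have g: "2*A + t4 \<le> 2*E*A + 2*B" if "t4 \<le> B" "2*A \<le> 2*E*A" "0 \<le> B" for A E B t4 :: real
      using that by linarith
    have "2*(L*y^6) + 2*(L^2*y^8) + 2*(L^3*y^10) + exp th * (L^4*y^12)
        = 2*(L*y^6 + L^2*y^8 + L^3*y^10) + exp th * (L^4*y^12)" by (simp add: algebra_simps)
    also have "\<dots> \<le> 2*exp (L*y^2/4)*(L*y^6 + L^2*y^8 + L^3*y^10) + 2*(exp (L*y^2/4) * (L^4*y^12))"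
      by (rule g[OF a b c])
    also have "\<dots> = 2 * exp (L*y^2/4) * S" using d by simp
    finally show ?thesis .
  qed
  finally have bE2: "\<bar>exp z - Qf L y - Of L y\<bar> \<le> 2 * exp (L*y^2/4) * S" .
  have ex: "exp (-L*hh y) = exp (-L*y^2/2) * exp z" by (simp add: z_def exp_add[symmetric] algebra_simps)
  have "\<bar>exp (-L*hh y) - exp (-L*y^2/2) * (Qf L y + Of L y)\<bar> = exp (-L*y^2/2) * \<bar>exp z - Qf L y - Of L y\<bar>"
  proof -
    have "exp (-L*hh y) - exp (-L*y^2/2) * (Qf L y + Of L y) = exp (-L*y^2/2) * (exp z - Qf L y - Of L y)"
      unfolding ex by (simp add: algebra_simps)
    then show ?thesis by (simp add: abs_mult)
  qed
  also have "\<dots> \<le> exp (-L*y^2/2) * (2 * exp (L*y^2/4) * S)" using bE2 by (intro mult_left_mono) auto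
  also have "\<dots> = 2 * exp (-L*y^2/4) * S" by (simp add: exp_add[symmetric] algebra_simps)
  finally show ?thesis unfolding S_def .
qed

lemma gm:
  fixes s :: real assumes s: "0 < s"
  shows "((\<lambda>y. exp (- s * y^2/2) * y^(2*k)) has_integral (sqrt (2*pi / s) * fact (2*k) / ((2 * s)^k * fact k))) UNIV"
proof -
  define \<sigma> where "\<sigma> = 1 / sqrt s"
  have sp: "0 < \<sigma>" using s by (simp add: \<sigma>_def)
  have s2: "\<sigma>^2 = 1/s" using s by (simp add: \<sigma>_def power_divide)
  have hb: "has_bochner_integral lborel (\<lambda>x. normal_density 0 \<sigma> x * (x - 0) ^ (2 * k)) (fact (2 * k) / ((2 / \<sigma>^2)^k * fact k))"
    by (rule normal_moment_even[OF sp])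
  have "((\<lambda>x. normal_density 0 \<sigma> x * (x - 0) ^ (2 * k)) has_integral (fact (2 * k) / ((2 / \<sigma>^2)^k * fact k))) UNIV"
    using has_integral_integral_lborel[OF integrable.intros[OF hb]] has_bochner_integral_integral_eq[OF hb]
    by simp
  then have H: "((\<lambda>x. sqrt (2*pi / s) * (normal_density 0 \<sigma> x * (x - 0) ^ (2 * k))) has_integral
      (sqrt (2*pi / s) * (fact (2 * k) / ((2 / \<sigma>^2)^k * fact k)))) UNIV"
    by (rule has_integral_mult_right)
  have F: "(\<lambda>x. sqrt (2*pi / s) * (normal_density 0 \<sigma> x * (x - 0) ^ (2 * k))) = (\<lambda>y. exp (- s * y^2/2) * y^(2*k))"
  proof
    fix x :: real
    have e1: "sqrt (2*pi / s) * (1 / sqrt (2 * pi * \<sigma>^2)) = 1" using s by (simp add: s2 real_sqrt_mult[symmetric])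
    have e2: "exp (- (x^2) / (2 * \<sigma>^2)) = exp (- s * x^2 / 2)" using s by (simp add: s2)
    have "sqrt (2*pi / s) * (normal_density 0 \<sigma> x * (x - 0) ^ (2 * k))
        = (sqrt (2*pi / s) * (1 / sqrt (2 * pi * \<sigma>^2))) * exp (- (x^2) / (2 * \<sigma>^2)) * x ^ (2 * k)"
      unfolding normal_density_def by simp
    then show "sqrt (2*pi / s) * (normal_density 0 \<sigma> x * (x - 0) ^ (2 * k)) = exp (- s * x^2 / 2) * x^(2*k)"
      unfolding e1 e2 by simp
  qed
  have V: "sqrt (2*pi / s) * (fact (2 * k) / ((2 / \<sigma>^2)^k * fact k)) = sqrt (2*pi / s) * fact (2*k) / ((2 * s)^k * fact k)"
  proof -
    have "2 / \<sigma>^2 = 2 * s" using s by (simp add: s2)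
    then show ?thesis by simp
  qed
  show ?thesis using H unfolding F V .
qed

lemma gmL:
  fixes L :: real assumes L: "0 < L"
  shows "((\<lambda>y. exp (- L * y^2 / 4) * y^(2*k)) has_integral (sqrt (4 * pi / L) * fact (2*k) / (L^k * fact k))) UNIV"
proof -
  have "((\<lambda>y. exp (- (L/2) * y^2 / 2) * y^(2*k)) has_integral (sqrt (2*pi / (L/2)) * fact (2*k) / ((2 * (L/2))^k * fact k))) UNIV"
    using gm[of "L/2" k] L by simp
  moreover have "(\<lambda>y. exp (- (L/2) * y^2 / 2) * y^(2*k)) = (\<lambda>y. exp (- L * y^2 / 4) * y^(2*k))" by (rule ext) simp
  moreover have "sqrt (2*pi / (L/2)) = sqrt (4 * pi / L)" by simp
  moreover have "(2 * (L/2)) = L" by simp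
  ultimately show ?thesis by simp
qed

lemma gmL2:
  fixes L :: real assumes L: "0 < L"
  shows "((\<lambda>y. exp (- L * y^2 / 2) * y^(2*k)) has_integral (sqrt (2 * pi / L) * fact (2*k) / ((2 * L)^k * fact k))) UNIV"
  using gm[of L k] L by simp

lemma e_bounds: "16/7 \<le> exp (1::real)" "exp (1::real) \<le> 3"
proof -
  have "4/3 \<le> exp (1/3::real)" using exp_ge_add_one_self[of "1/3::real"] by simp
  then have "(4/3)^3 \<le> exp (1/3::real) ^ 3" by (intro power_mono) auto
  also have "exp (1/3::real) ^ 3 = exp 1" by (simp add: exp_of_nat_mult[symmetric])
  finally have "(4/3::real)^3 \<le> exp 1" .
  moreover have "(4/3::real)^3 = 64/27" by (simp add: power_divide)
  ultimately show "16/7 \<le> exp (1::real)" by linarith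
  show "exp (1::real) \<le> 3" by (rule exp_le)
qed

lemma hh_outer:
  fixes y :: real assumes y: "-1 \<le> y" "y \<le> exp 1 - 1" "1/2 \<le> \<bar>y\<bar>"
  shows "1/16 \<le> hh y"
proof (cases "y < 0")
  case True
  then have yy: "y \<le> -1/2" using y by simp
  define u where "u = 1 + y"
  have u: "0 \<le> u" "u \<le> 1/2" using y yy by (auto simp: u_def)
  have ul: "- (1 / exp 1) \<le> u * ln u"
  proof (cases "u = 0")
    case False
    then have u0: "0 < u" using u by simp
    have "ln (1 / (u * exp 1)) \<le> 1 / (u * exp 1) - 1" using u0 by (intro ln_le_minus_one) simp
    moreover have "ln (1 / (u * exp 1)) = - ln u - 1" using u0 by (simp add: ln_div ln_mult)
    ultimately have "- ln u \<le> 1 / (u * exp 1)" by simp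
    then have "u * (- ln u) \<le> u * (1 / (u * exp 1))" using u0 by (intro mult_left_mono) auto
    then show ?thesis using u0 by simp
  qed simp
  have "1 / exp 1 \<le> (7::real)/16" using e_bounds(1) by (simp add: divide_simps)
  then show ?thesis using ul yy by (simp add: hh_def u_def[symmetric])
next
  case False
  then have yy: "1/2 \<le> y" using y by simp
  have "hh (1/2) \<le> hh y"
  proof (rule DERIV_nonneg_imp_increasing_open[OF yy])
    fix x :: real assume x: "1/2 < x" "x < y"
    have "DERIV hh x :> ln (1 + x)" unfolding hh_def[abs_def] using x
      by (auto intro!: derivative_eq_intros simp: field_simps)
    then show "\<exists>d. DERIV hh x :> d \<and> 0 \<le> d" using x by auto
  next
    show "continuous_on {1/2..y} hh" unfolding hh_def[abs_def]
      by (intro continuous_intros) auto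
  qed
  moreover have "1/16 \<le> hh (1/2)"
  proof -
    have H: "\<bar>hh (1/2) - ((1/2::real)^2/2 - (1/2)^3/6 + (1/2)^4/12 - (1/2)^5/20)\<bar> \<le> 2 * (1/2::real)^6"
      by (rule h_taylor) simp
    have eq1: "((1/2::real)^2/2 - (1/2)^3/6 + (1/2)^4/12 - (1/2)^5/20) = 69/640" by (simp add: power_divide)
    have eq2: "2 * (1/2::real)^6 = 1/32" by (simp add: power_divide)
    have H2: "\<bar>hh (1/2) - 69/640\<bar> \<le> 1/32" using H unfolding eq1 eq2 .
    have "- (hh (1/2) - 69/640) \<le> \<bar>hh (1/2) - 69/640\<bar>" by (rule abs_ge_minus_self)
    then show ?thesis using H2 by linarith
  qed
  ultimately show ?thesis by simp
qed

lemma Of_odd: "Of L (- y) = - Of L y"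
  by (simp add: Of_def)


definition Bd :: "real \<Rightarrow> real" where
  "Bd L = 2 * exp (- L / 16) + 2 * sqrt (4 * pi / L) * 697320 / L^2 + exp (- L / 16) * sqrt (4 * pi / L) * (1 + 8 / (3 * L))"

lemma K_bound:
  fixes L :: real assumes L: "1 \<le> L"
    and int: "(\<lambda>y. exp (- L * hh y)) integrable_on {-1..exp 1 - 1}"
  shows "\<bar>integral {-1..exp 1 - 1} (\<lambda>y. exp (- L * hh y)) - sqrt (2 * pi / L) * (1 - 1 / (24 * L))\<bar> \<le> Bd L"
proof -
  have L0: "0 < L" using L by simp
  define f where "f y = exp (- L * hh y)" for y
  define P where "P y = exp (- L * y^2 / 2) * (Qf L y + Of L y)" for y
  define F where "F y = exp (- L * y^2 / 2) * Qf L y" for y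
  define G where "G y = exp (- L * y^2 / 2) * Of L y" for y
  define Bn where "Bn y = 2 * exp (- L * y^2 / 4) * (L * y^6 + L^2 * y^8 + L^3 * y^10 + L^4 * y^12)" for y
  define T where "T y = exp (- L / 16) * (exp (- L * y^2 / 4) * (1 + L * y^4 / 12 + L^2 * y^6 / 72))" for y
  define I where "I = {-1/2..1/2::real}"
  have e: "16/7 \<le> exp (1::real)" "exp (1::real) \<le> 3" by (rule e_bounds)+
  have intf: "f integrable_on {-1..exp 1 - 1}" using int by (simp add: f_def[abs_def])
  have sub: "f integrable_on {a..b}" if "-1 \<le> a" "b \<le> exp 1 - 1" for a b
    using integrable_subinterval_real[OF intf] that by auto
  have split: "integral {-1..exp 1 - 1} f = integral {-1..-1/2} f + integral I f + integral {1/2..exp 1 - 1} f"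
  proof -
    have "integral {-1..-1/2} f + integral {-1/2..exp 1 - 1} f = integral {-1..exp 1 - 1} f"
      using e by (intro Henstock_Kurzweil_Integration.integral_combine intf) auto
    moreover have "integral {-1/2..1/2} f + integral {1/2..exp 1 - 1} f = integral {-1/2..exp 1 - 1} f"
      using e by (intro Henstock_Kurzweil_Integration.integral_combine sub) auto
    ultimately show ?thesis by (simp add: I_def)
  qed
  have fle: "norm (f y) \<le> exp (- L / 16)" if "-1 \<le> y" "y \<le> exp 1 - 1" "1/2 \<le> \<bar>y\<bar>" for y
  proof -
    have "1/16 \<le> hh y" by (rule hh_outer[OF that])
    then have "L * (1/16) \<le> L * hh y" using L0 by (intro mult_left_mono) auto
    then show ?thesis by (simp add: f_def)
  qed
  have o1: "norm (integral {-1..-1/2} f) \<le> exp (- L / 16) * (1/2)"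
  proof -
    have "norm (integral {-1..-1/2} f) \<le> integral {-1..-1/2::real} (\<lambda>y. exp (- L / 16))"
    proof (rule integral_norm_bound_integral)
      show "f integrable_on {-1..-1/2}" using e by (intro sub) auto
      show "(\<lambda>y. exp (- L / 16)) integrable_on {-1..-1/2::real}" by (rule integrable_const_ivl)
      show "norm (f y) \<le> exp (- L / 16)" if "y \<in> {-1..-1/2}" for y using that e by (intro fle) auto
    qed
    then show ?thesis by simp
  qed
  have o2: "norm (integral {1/2..exp 1 - 1} f) \<le> exp (- L / 16) * (3/2)"
  proof -
    have "norm (integral {1/2..exp 1 - 1} f) \<le> integral {1/2..exp 1 - 1::real} (\<lambda>y. exp (- L / 16))"
    proof (rule integral_norm_bound_integral)
      show "f integrable_on {1/2..exp 1 - 1}" using e by (intro sub) auto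
      show "(\<lambda>y. exp (- L / 16)) integrable_on {1/2..exp 1 - 1::real}" by (rule integrable_const_ivl)
      show "norm (f y) \<le> exp (- L / 16)" if "y \<in> {1/2..exp 1 - 1}" for y using that e by (intro fle) auto
    qed
    also have "\<dots> = (exp 1 - 3/2) * exp (- L / 16)" using e by simp
    also have "\<dots> \<le> (3/2) * exp (- L / 16)" using e by (intro mult_right_mono) auto
    finally show ?thesis by simp
  qed
  have contP: "continuous_on I P" unfolding P_def[abs_def] Qf_def Of_def by (intro continuous_intros) auto
  have contF: "continuous_on I F" unfolding F_def[abs_def] Qf_def by (intro continuous_intros) auto
  have contG: "continuous_on I G" unfolding G_def[abs_def] Of_def by (intro continuous_intros) auto
  have contBn: "continuous_on I Bn" unfolding Bn_def[abs_def] by (intro continuous_intros) auto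
  have ev0: "0 \<le> (y::real)^n" if "even n" for y n using that by (simp add: zero_le_even_power)
  have Bn0: "0 \<le> Bn y" for y
  proof -
    have "0 \<le> y^6" "0 \<le> y^8" "0 \<le> y^10" "0 \<le> y^12" by (auto intro: ev0)
    then have "0 \<le> L*y^6 + L^2*y^8 + L^3*y^10 + L^4*y^12" using L0 by simp
    then show ?thesis unfolding Bn_def by simp
  qed
  have intI: "f integrable_on I" unfolding I_def using e by (intro sub) auto
  have intP: "P integrable_on I" "F integrable_on I" "G integrable_on I" "Bn integrable_on I"
    unfolding I_def using contP contF contG contBn by (auto simp: I_def intro!: integrable_continuous_interval)
  have m3: "((\<lambda>y. exp (- L * y^2 / 4) * y^6) has_integral (sqrt (4 * pi / L) * 120 / L^3)) UNIV"
    using gmL[OF L0, of 3] by (simp add: fact_numeral field_simps)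
  have m4: "((\<lambda>y. exp (- L * y^2 / 4) * y^8) has_integral (sqrt (4 * pi / L) * 1680 / L^4)) UNIV"
    using gmL[OF L0, of 4] by (simp add: fact_numeral field_simps)
  have m5: "((\<lambda>y. exp (- L * y^2 / 4) * y^10) has_integral (sqrt (4 * pi / L) * 30240 / L^5)) UNIV"
    using gmL[OF L0, of 5] by (simp add: fact_numeral field_simps)
  have m6: "((\<lambda>y. exp (- L * y^2 / 4) * y^12) has_integral (sqrt (4 * pi / L) * 665280 / L^6)) UNIV"
    using gmL[OF L0, of 6] by (simp add: fact_numeral field_simps)
  have n0: "((\<lambda>y. exp (- L * y^2 / 4)) has_integral (sqrt (4 * pi / L))) UNIV"
    using gmL[OF L0, of 0] by simp
  have n2: "((\<lambda>y. exp (- L * y^2 / 4) * y^4) has_integral (sqrt (4 * pi / L) * 12 / L^2)) UNIV"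
    using gmL[OF L0, of 2] by (simp add: fact_numeral field_simps)
  have k0: "((\<lambda>y. exp (- L * y^2 / 2)) has_integral (sqrt (2 * pi / L))) UNIV"
    using gmL2[OF L0, of 0] by simp
  have k2: "((\<lambda>y. exp (- L * y^2 / 2) * y^4) has_integral (sqrt (2 * pi / L) * 3 / L^2)) UNIV"
    using gmL2[OF L0, of 2] by (simp add: fact_numeral field_simps)
  have k3: "((\<lambda>y. exp (- L * y^2 / 2) * y^6) has_integral (sqrt (2 * pi / L) * 15 / L^3)) UNIV"
    using gmL2[OF L0, of 3] by (simp add: fact_numeral field_simps)
  have BnR: "(Bn has_integral (2 * sqrt (4 * pi / L) * 697320 / L^2)) UNIV"
  proof -
    have H: "((\<lambda>y. 2 * (L * (exp (- L * y^2 / 4) * y^6) + L^2 * (exp (- L * y^2 / 4) * y^8)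
        + L^3 * (exp (- L * y^2 / 4) * y^10) + L^4 * (exp (- L * y^2 / 4) * y^12))) has_integral
        2 * (L * (sqrt (4 * pi / L) * 120 / L^3) + L^2 * (sqrt (4 * pi / L) * 1680 / L^4)
        + L^3 * (sqrt (4 * pi / L) * 30240 / L^5) + L^4 * (sqrt (4 * pi / L) * 665280 / L^6))) UNIV"
      by (intro has_integral_mult_right has_integral_add m3 m4 m5 m6)
    have Fq: "(\<lambda>y. 2 * (L * (exp (- L * y^2 / 4) * y^6) + L^2 * (exp (- L * y^2 / 4) * y^8)
        + L^3 * (exp (- L * y^2 / 4) * y^10) + L^4 * (exp (- L * y^2 / 4) * y^12))) = Bn"
      by (rule ext) (simp add: Bn_def algebra_simps)
    have Vq: "2 * (L * (sqrt (4 * pi / L) * 120 / L^3) + L^2 * (sqrt (4 * pi / L) * 1680 / L^4)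
        + L^3 * (sqrt (4 * pi / L) * 30240 / L^5) + L^4 * (sqrt (4 * pi / L) * 665280 / L^6))
        = 2 * sqrt (4 * pi / L) * 697320 / L^2"
      using L0 by (simp add: field_simps eval_nat_numeral)
    show ?thesis using H unfolding Fq Vq .
  qed
  have TR: "(T has_integral (exp (- L / 16) * sqrt (4 * pi / L) * (1 + 8 / (3 * L)))) UNIV"
  proof -
    have H: "((\<lambda>y. exp (- L / 16) * (exp (- L * y^2 / 4) + L / 12 * (exp (- L * y^2 / 4) * y^4)
        + L^2 / 72 * (exp (- L * y^2 / 4) * y^6))) has_integral
        exp (- L / 16) * (sqrt (4 * pi / L) + L / 12 * (sqrt (4 * pi / L) * 12 / L^2)
        + L^2 / 72 * (sqrt (4 * pi / L) * 120 / L^3))) UNIV"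
      by (intro has_integral_mult_right has_integral_add n0 n2 m3)
    have Fq: "(\<lambda>y. exp (- L / 16) * (exp (- L * y^2 / 4) + L / 12 * (exp (- L * y^2 / 4) * y^4)
        + L^2 / 72 * (exp (- L * y^2 / 4) * y^6))) = T"
      by (rule ext) (simp add: T_def algebra_simps)
    have Vq: "exp (- L / 16) * (sqrt (4 * pi / L) + L / 12 * (sqrt (4 * pi / L) * 12 / L^2)
        + L^2 / 72 * (sqrt (4 * pi / L) * 120 / L^3)) = exp (- L / 16) * sqrt (4 * pi / L) * (1 + 8 / (3 * L))"
      using L0 by (simp add: field_simps eval_nat_numeral)
    show ?thesis using H unfolding Fq Vq .
  qed
  have FR: "(F has_integral (sqrt (2 * pi / L) * (1 - 1 / (24 * L)))) UNIV"
  proof -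
    have H: "((\<lambda>y. exp (- L * y^2 / 2) - L / 12 * (exp (- L * y^2 / 2) * y^4)
        + L^2 / 72 * (exp (- L * y^2 / 2) * y^6)) has_integral
        sqrt (2 * pi / L) - L / 12 * (sqrt (2 * pi / L) * 3 / L^2)
        + L^2 / 72 * (sqrt (2 * pi / L) * 15 / L^3)) UNIV"
      by (intro has_integral_mult_right has_integral_add has_integral_diff k0 k2 k3)
    have Fq: "(\<lambda>y. exp (- L * y^2 / 2) - L / 12 * (exp (- L * y^2 / 2) * y^4)
        + L^2 / 72 * (exp (- L * y^2 / 2) * y^6)) = F"
      by (rule ext) (simp add: F_def Qf_def algebra_simps)
    have Vq: "sqrt (2 * pi / L) - L / 12 * (sqrt (2 * pi / L) * 3 / L^2)
        + L^2 / 72 * (sqrt (2 * pi / L) * 15 / L^3) = sqrt (2 * pi / L) * (1 - 1 / (24 * L))"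
      using L0 by (simp add: field_simps eval_nat_numeral)
    show ?thesis using H unfolding Fq Vq .
  qed
  have mid: "norm (integral I (\<lambda>y. f y - P y)) \<le> 2 * sqrt (4 * pi / L) * 697320 / L^2"
  proof -
    have "norm (integral I (\<lambda>y. f y - P y)) \<le> integral I Bn"
    proof (rule integral_norm_bound_integral)
      show "(\<lambda>y. f y - P y) integrable_on I" using intI intP by (intro integrable_diff)
      show "Bn integrable_on I" by (rule intP)
      show "norm (f y - P y) \<le> Bn y" if "y \<in> I" for y
      proof -
        have y: "\<bar>y\<bar> \<le> 1/2" using that by (auto simp: I_def)
        have "0 \<le> L" using L0 by simp
        from B_point[OF this y] show ?thesis by (simp add: f_def P_def Bn_def)
      qed
    qed
    also have "integral I Bn \<le> integral UNIV Bn"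
      by (rule integral_subset_le) (use intP BnR Bn0 in \<open>auto\<close>)
    also have "integral UNIV Bn = 2 * sqrt (4 * pi / L) * 697320 / L^2" using BnR by (rule integral_unique)
    finally show ?thesis .
  qed
  have Godd: "integral I G = 0"
  proof -
    have "integral {- (1/2) .. - (- (1/2))} (\<lambda>x. G (- x)) = integral {-(1/2)..(1/2::real)} G"
      by (rule Henstock_Kurzweil_Integration.integral_reflect_real)
    moreover have "(\<lambda>x. G (- x)) = (\<lambda>x. - G x)" by (rule ext) (simp add: G_def Of_odd)
    ultimately have "integral I (\<lambda>x. - G x) = integral I G" by (simp add: I_def)
    then show ?thesis by (simp add: integral_neg)
  qed
  have tail: "\<bar>integral UNIV F - integral I F\<bar> \<le> exp (- L / 16) * sqrt (4 * pi / L) * (1 + 8 / (3 * L))"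
  proof -
    have T0: "0 \<le> T y" for y
    proof -
      have "0 \<le> y^4" "0 \<le> y^6" by (auto intro: ev0)
      then have "0 \<le> 1 + L * y^4 / 12 + L^2 * y^6 / 72" using L0 by simp
      then show ?thesis unfolding T_def by simp
    qed
    have FT: "\<bar>F y\<bar> \<le> T y" if "y \<notin> I" for y
    proof -
      have "1/2 < \<bar>y\<bar>" using that by (auto simp: I_def)
      then have "(1/2)^2 \<le> \<bar>y\<bar>^2" by (intro power_mono) auto
      then have y2: "1/4 \<le> y^2" by (simp add: power_divide)
      have "L * (1/4) \<le> L * y^2" using L0 y2 by (intro mult_left_mono) auto
      then have "- L * y^2 / 2 \<le> - L / 16 + - L * y^2 / 4" by simp
      then have ex: "exp (- L * y^2 / 2) \<le> exp (- L / 16) * exp (- L * y^2 / 4)"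
        by (simp add: exp_add[symmetric])
      have "0 \<le> y^4" "0 \<le> y^6" by (auto intro: ev0)
      then have q: "\<bar>Qf L y\<bar> \<le> 1 + L * y^4 / 12 + L^2 * y^6 / 72" using L0 unfolding Qf_def by (simp add: abs_le_iff)
      have "\<bar>F y\<bar> = exp (- L * y^2 / 2) * \<bar>Qf L y\<bar>" by (simp add: F_def abs_mult)
      also have "\<dots> \<le> (exp (- L / 16) * exp (- L * y^2 / 4)) * (1 + L * y^4 / 12 + L^2 * y^6 / 72)"
        by (rule mult_mono[OF ex q]) auto
      also have "\<dots> = T y" by (simp add: T_def)
      finally show ?thesis .
    qed
    have FU: "F integrable_on UNIV" using FR by blast
    have FIU: "(\<lambda>y. if y \<in> I then F y else 0) integrable_on UNIV" using intP(2) by (simp add: integrable_restrict_UNIV)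
    have "integral UNIV F - integral I F = integral UNIV (\<lambda>y. F y - (if y \<in> I then F y else 0))"
      using integral_diff[OF FU FIU] by (simp add: integral_restrict_UNIV)
    also have "\<bar>\<dots>\<bar> \<le> integral UNIV T"
    proof (rule integral_norm_bound_integral[where f="\<lambda>y. F y - (if y \<in> I then F y else 0)", unfolded real_norm_def])
      show "(\<lambda>y. F y - (if y \<in> I then F y else 0)) integrable_on UNIV" using FU FIU by (rule integrable_diff)
      show "T integrable_on UNIV" using TR by blast
      show "\<bar>F y - (if y \<in> I then F y else 0)\<bar> \<le> T y" if "y \<in> UNIV" for y
        using FT[of y] T0[of y] by (cases "y \<in> I") auto
    qed
    also have "integral UNIV T = exp (- L / 16) * sqrt (4 * pi / L) * (1 + 8 / (3 * L))" using TR by (rule integral_unique)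
    finally show ?thesis .
  qed
  have PI: "integral I P = integral I F"
  proof -
    have "P = (\<lambda>y. F y + G y)" by (rule ext) (simp add: P_def F_def G_def algebra_simps)
    then have "integral I P = integral I F + integral I G" using intP by (simp add: integral_add)
    then show ?thesis using Godd by simp
  qed
  have fI: "integral I f = integral I (\<lambda>y. f y - P y) + integral I P"
    using intI intP by (simp add: integral_diff)
  have FRv: "integral UNIV F = sqrt (2 * pi / L) * (1 - 1 / (24 * L))" using FR by (rule integral_unique)
  have "integral {-1..exp 1 - 1} f - sqrt (2 * pi / L) * (1 - 1 / (24 * L))
      = integral {-1..-1/2} f + integral {1/2..exp 1 - 1} f + integral I (\<lambda>y. f y - P y) - (integral UNIV F - integral I F)"
    using split fI PI FRv by simp
  moreover have "\<bar>integral {-1..-1/2} f + integral {1/2..exp 1 - 1} f + integral I (\<lambda>y. f y - P y) - (integral UNIV F - integral I F)\<bar>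
      \<le> Bd L"
  proof -
    have gen: "\<bar>a + b + c - d\<bar> \<le> x1 + x2 + x3 + x4" if "\<bar>a\<bar> \<le> x1" "\<bar>b\<bar> \<le> x2" "\<bar>c\<bar> \<le> x3" "\<bar>d\<bar> \<le> x4"
      for a b c d x1 x2 x3 x4 :: real using that by linarith
    have "\<bar>integral {-1..-1/2} f + integral {1/2..exp 1 - 1} f + integral I (\<lambda>y. f y - P y) - (integral UNIV F - integral I F)\<bar>
       \<le> exp (- L / 16) * (1/2) + exp (- L / 16) * (3/2) + 2 * sqrt (4 * pi / L) * 697320 / L^2
          + exp (- L / 16) * sqrt (4 * pi / L) * (1 + 8 / (3 * L))"
      by (rule gen[OF o1[unfolded real_norm_def] o2[unfolded real_norm_def] mid[unfolded real_norm_def] tail])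
    also have "\<dots> = Bd L" unfolding Bd_def by (simp add: algebra_simps)
    finally show ?thesis .
  qed
  ultimately show ?thesis by (simp add: f_def[abs_def])
qed

lemma sub_identity:
  fixes t y :: real assumes y: "-1 \<le> y"
  shows "exp (- t * (y / exp 1 + 1 / exp 1) * ln (y / exp 1 + 1 / exp 1)) = exp (t / exp 1) * exp (- (t / exp 1) * hh y)"
proof (cases "y = -1")
  case True
  then show ?thesis by (simp add: hh_def exp_add[symmetric])
next
  case False
  then have y1: "0 < 1 + y" using y by simp
  have x: "y / exp 1 + 1 / exp 1 = (1 + y) / exp 1" by (simp add: field_simps)
  have l: "ln ((1 + y) / exp 1) = ln (1 + y) - 1" using y1 by (simp add: ln_div)
  have "- t * ((1 + y) / exp 1) * (ln (1 + y) - 1) = t / exp 1 + (- (t / exp 1) * hh y)"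
    by (simp add: hh_def field_simps)
  then show ?thesis unfolding x l by (simp add: exp_add[symmetric])
qed

lemma K_rep:
  fixes t :: real assumes t: "0 < t"
  defines "L \<equiv> t / exp 1"
  shows "(\<lambda>y. exp (- L * hh y)) integrable_on {-1..exp 1 - 1}"
    and "sd_f t = L * exp L * integral {-1..exp 1 - 1} (\<lambda>y. exp (- L * hh y))"
proof -
  let ?f = "\<lambda>x. exp (- t * x * ln x)"
  have p1: "?f integrable_on {0..1}" "sd_f t = t * integral {0..1} ?f" using part1[of t] by auto
  define i where "i = integral {0..1} ?f"
  have hi: "(?f has_integral i) (cbox 0 1)" using p1(1) unfolding i_def by (simp add: has_integral_integral)
  have "((\<lambda>x. ?f ((1 / exp 1) *\<^sub>R x + 1 / exp 1)) has_integral (i /\<^sub>R (1 / exp 1) ^ DIM(real)))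
         (cbox ((0 - 1 / exp 1) /\<^sub>R (1 / exp 1)) ((1 - 1 / exp 1) /\<^sub>R (1 / exp 1)))"
    by (rule has_integral_affinity'[OF hi]) simp
  moreover have a1: "(0 - 1 / exp 1) /\<^sub>R (1 / exp 1) = (-1::real)" by simp
  moreover have a2: "(1 - 1 / exp 1) /\<^sub>R (1 / exp 1) = exp 1 - (1::real)" by (simp add: field_simps)
  moreover have a3: "i /\<^sub>R (1 / exp 1) ^ DIM(real) = i * exp 1" by simp
  moreover have a4: "(\<lambda>x. ?f ((1 / exp 1) *\<^sub>R x + 1 / exp 1)) = (\<lambda>y. ?f (y / exp 1 + 1 / exp 1))" by simp
  ultimately have h2: "((\<lambda>y. ?f (y / exp 1 + 1 / exp 1)) has_integral (i * exp 1)) {-1..exp 1 - 1}"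
    by (simp only: cbox_interval)
  have h3: "((\<lambda>y. exp L * exp (- L * hh y)) has_integral (i * exp 1)) {-1..exp 1 - 1}"
  proof (rule has_integral_eq[OF _ h2])
    fix x :: real assume "x \<in> {-1..exp 1 - 1}"
    then have "-1 \<le> x" by simp
    then show "?f (x / exp 1 + 1 / exp 1) = exp L * exp (- L * hh x)"
      unfolding L_def by (rule sub_identity)
  qed
  have "((\<lambda>y. (1 / exp L) * (exp L * exp (- L * hh y))) has_integral (1 / exp L) * (i * exp 1)) {-1..exp 1 - 1}"
    by (rule has_integral_mult_right[OF h3])
  then have h4: "((\<lambda>y. exp (- L * hh y)) has_integral (i * exp 1 / exp L)) {-1..exp 1 - 1}"
    by simp
  then show "(\<lambda>y. exp (- L * hh y)) integrable_on {-1..exp 1 - 1}" by blast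
  have "integral {-1..exp 1 - 1} (\<lambda>y. exp (- L * hh y)) = i * exp 1 / exp L" using h4 by (rule integral_unique)
  then show "sd_f t = L * exp L * integral {-1..exp 1 - 1} (\<lambda>y. exp (- L * hh y))"
    using p1(2) unfolding i_def[symmetric] L_def by simp
qed

theorem mainTheorem3:
  shows "(\<forall>t::real. (\<lambda>x. exp (- t * x * ln x)) integrable_on {0..1}
            \<and> sd_f t = t * integral {0..1} (\<lambda>x. exp (- t * x * ln x)))
    \<and> ((\<lambda>t. sd_f t - sqrt (2 * pi * t / exp 1) * (1 - exp 1 / (24 * t)) * exp (t / exp 1))
        \<in> O[at_top](\<lambda>t. sqrt (2 * pi * t / exp 1) * t powr (-2) * exp (t / exp 1)))"
proof (intro conjI allI)
  fix t :: real
  show "(\<lambda>x. exp (- t * x * ln x)) integrable_on {0..1}" "sd_f t = t * integral {0..1} (\<lambda>x. exp (- t * x * ln x))"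
    using part1[of t] by auto
next
  define B where "B t = (t / exp 1) * exp (t / exp 1) * Bd (t / exp 1)" for t :: real
  have ev: "eventually (\<lambda>t. norm (sd_f t - sqrt (2 * pi * t / exp 1) * (1 - exp 1 / (24 * t)) * exp (t / exp 1))
                \<le> norm (B t)) at_top"
    using eventually_ge_at_top[of "exp 1"]
  proof eventually_elim
    case (elim t)
    define L where "L = t / exp 1"
    have t0: "0 < t" using elim by (smt (verit) exp_gt_zero)
    have L1: "1 \<le> L" using elim by (simp add: L_def)
    have L0: "0 < L" using L1 by simp
    note kr = K_rep[OF t0, folded L_def]
    define K where "K = integral {-1..exp 1 - 1} (\<lambda>y. exp (- L * hh y))"
    have kb: "\<bar>K - sqrt (2 * pi / L) * (1 - 1 / (24 * L))\<bar> \<le> Bd L"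
      unfolding K_def by (rule K_bound[OF L1 kr(1)])
    have s1: "sqrt (2 * pi * t / exp 1) = L * sqrt (2 * pi / L)"
    proof -
      have "2 * pi * t / exp 1 = L^2 * (2 * pi / L)" using L0 by (simp add: L_def field_simps power2_eq_square)
      then have "sqrt (2 * pi * t / exp 1) = sqrt (L^2) * sqrt (2 * pi / L)" by (simp only: real_sqrt_mult)
      then show ?thesis using L0 by simp
    qed
    have s2: "exp 1 / (24 * t) = 1 / (24 * L)" by (simp add: L_def)
    have eq: "sd_f t - sqrt (2 * pi * t / exp 1) * (1 - exp 1 / (24 * t)) * exp (t / exp 1)
        = L * exp L * (K - sqrt (2 * pi / L) * (1 - 1 / (24 * L)))"
      unfolding kr(2) s1 s2 K_def[symmetric] L_def[symmetric] by (simp add: algebra_simps)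
    have "\<bar>L * exp L * (K - sqrt (2 * pi / L) * (1 - 1 / (24 * L)))\<bar> \<le> L * exp L * Bd L"
      using kb L0 by (simp add: abs_mult)
    moreover have "L * exp L * Bd L \<le> \<bar>B t\<bar>"
    proof -
      have "L * exp L * Bd L = B t" by (simp add: B_def L_def)
      then show ?thesis by simp
    qed
    ultimately show ?case unfolding eq by simp
  qed
  have "(\<lambda>t. sd_f t - sqrt (2 * pi * t / exp 1) * (1 - exp 1 / (24 * t)) * exp (t / exp 1)) \<in> O(B)"
    by (rule landau_o.big_mono[OF ev])
  moreover have "B \<in> O(\<lambda>t. sqrt (2 * pi * t / exp 1) * t powr (-2) * exp (t / exp 1))"
    unfolding B_def Bd_def by real_asymp
  ultimately show "(\<lambda>t. sd_f t - sqrt (2 * pi * t / exp 1) * (1 - exp 1 / (24 * t)) * exp (t / exp 1))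
        \<in> O(\<lambda>t. sqrt (2 * pi * t / exp 1) * t powr (-2) * exp (t / exp 1))"
    by (rule landau_o.big_trans)
qed

end
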